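(* Let $P\subseteq\mathbb{R}^n$ be a rational polyhedron, let $f:\mathbb{R}^n\to\mathbb{R}$ be a polynomial of degree at most three, and let $\bar x\in P$ and $\bar v\in\operatorname{rec}P$ be such that $f(\bar x+\lambda\bar v)\to+\infty$ as $\lambda\to+\infty$ with $f(\bar x+\lambda\bar v)=\Theta(\lambda^3)$. Then for every $\epsilon>0$ there exist $\tilde x,\tilde v\in\mathbb{Q}^n$ with $\tilde x\in P$, $\tilde v\in\operatorname{rec}P$, $\|\bar x-\tilde x\|<\epsilon$, $\|\bar v-\tilde v\|<\epsilon$, such that $f(\tilde x+\lambda\tilde v)\to+\infty$ as $\lambda\to+\infty$ and $f(\tilde x+\lambda\tilde v)=\Theta(\lambda^3)$.
   Context: $\operatorname{rec}P$ denotes the recession cone of $P$, and $\|\cdot\|$ is the Euclidean norm. *)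

theory Defs
  imports "HOL-Analysis.Analysis" "HOL-Library.Landau_Symbols"
begin

definition rational_vec :: "real^'n \<Rightarrow> bool" where
  "rational_vec x \<longleftrightarrow> (\<forall>i. x $ i \<in> \<rat>)"

definition rational_polyhedron :: "(real^'n) set \<Rightarrow> bool" where
  "rational_polyhedron P \<longleftrightarrow>
     (\<exists>C :: ((real^'n) \<times> real) set. finite C \<and>
        (\<forall>(a,b)\<in>C. rational_vec a \<and> b \<in> \<rat>) \<and>
        P = {x. \<forall>(a,b)\<in>C. a \<bullet> x \<le> b})"

definition rec_cone :: "(real^'n) set \<Rightarrow> (real^'n) set" where
  "rec_cone P = {v. \<forall>x\<in>P. \<forall>t::real. t \<ge> 0 \<longrightarrow> x + t *\<^sub>R v \<in> P}"

definition poly_deg_le3 :: "(real^'n \<Rightarrow> real) \<Rightarrow> bool" where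
  "poly_deg_le3 f \<longleftrightarrow>
     (\<exists>(c::real) (a::'n \<Rightarrow> real) (B::'n \<Rightarrow> 'n \<Rightarrow> real) (D::'n \<Rightarrow> 'n \<Rightarrow> 'n \<Rightarrow> real).
        \<forall>x. f x = c + (\<Sum>i\<in>UNIV. a i * x $ i)
                 + (\<Sum>i\<in>UNIV. \<Sum>j\<in>UNIV. B i j * x $ i * x $ j)
                 + (\<Sum>i\<in>UNIV. \<Sum>j\<in>UNIV. \<Sum>k\<in>UNIV. D i j k * x $ i * x $ j * x $ k))"

end

theory Submission
  imports Defs
begin


definition qscale :: "rat \<Rightarrow> real \<Rightarrow> real" where "qscale q x = of_rat q * x"

interpretation Q: vector_space qscale
  by unfold_locales (simp_all add: qscale_def algebra_simps of_rat_add of_rat_mult)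

lemma Q_span_Rats: "x \<in> \<rat> \<Longrightarrow> 1 \<in> Q.span B \<Longrightarrow> x \<in> Q.span B"
proof -
  assume "x \<in> \<rat>" "1 \<in> Q.span B"
  then obtain q where "x = of_rat q" by (auto simp: Rats_def)
  then have "x = qscale q 1" by (simp add: qscale_def)
  then show ?thesis using Q.span_scale[OF \<open>1 \<in> Q.span B\<close>] by simp
qed

lemma rat_dense_polyhedron:
  fixes C :: "((real^'n) \<times> real) set" and y :: "real^'n"
  assumes fin: "finite C" and rat: "\<forall>(a,b)\<in>C. rational_vec a \<and> b \<in> \<rat>"
    and yin: "\<forall>(a,b)\<in>C. a \<bullet> y \<le> b" and eps: "\<epsilon> > 0"
  shows "\<exists>y'. rational_vec y' \<and> (\<forall>(a,b)\<in>C. a \<bullet> y' \<le> b) \<and> norm (y - y') < \<epsilon>"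
proof -
  define S where "S = insert 1 (range (\<lambda>i. y $ i))"
  have finS: "finite S" unfolding S_def by simp
  have ind1: "Q.independent {1::real}"
    by (simp add: Q.independent_insert Q.span_empty qscale_def)
  obtain B where B: "{1} \<subseteq> B" "B \<subseteq> Q.span S" "Q.independent B" "Q.span S \<subseteq> Q.span B"
    using Q.maximal_independent_subset_extend[of "{1}" "Q.span S"] ind1
    by (metis Q.span_base S_def empty_subsetI insertI1 insert_subset)
  have finB: "finite B" using Q.independent_span_bound[OF finS B(3) B(2)] by simp
  have 1: "1 \<in> B" using B by simp
  have yi: "y $ i \<in> Q.span B" for i using B(4) Q.span_base[of "y $ i" S] by (auto simp: S_def)
  have "\<forall>n b. \<exists>q. q \<in> \<rat> \<and> \<bar>q - b\<bar> < 1 / Suc n \<and> (b \<in> \<rat> \<longrightarrow> q = b)"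
  proof (intro allI)
    fix n :: nat and b :: real
    show "\<exists>q. q \<in> \<rat> \<and> \<bar>q - b\<bar> < 1 / Suc n \<and> (b \<in> \<rat> \<longrightarrow> q = b)"
    proof (cases "b \<in> \<rat>")
      case True then show ?thesis by (intro exI[of _ b]) simp
    next
      case False
      obtain q where "q \<in> \<rat>" "b < q" "q < b + 1 / Suc n"
        using Rats_dense_in_real[of b "b + 1 / Suc n"] by auto
      with False show ?thesis by (intro exI[of _ q]) auto
    qed
  qed
  then obtain s where s: "\<And>n b. s n b \<in> \<rat>" "\<And>n b. \<bar>s n b - b\<bar> < 1 / Suc n"
      "\<And>n b. b \<in> \<rat> \<Longrightarrow> s n b = b"
    by metis
  define R where "R = Q.representation B"
  define psi where "psi n r = (\<Sum>b\<in>B. of_rat (R r b) * s n b)" for n r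
  have s_lim: "((\<lambda>n. s n b) \<longlonglongrightarrow> b)" for b
  proof -
    have L: "(\<lambda>n. 1 / real (Suc n)) \<longlonglongrightarrow> 0"
      using LIMSEQ_inverse_real_of_nat by (simp add: inverse_eq_divide del: of_nat_Suc)
    have "((\<lambda>n. s n b - b) \<longlonglongrightarrow> 0)"
      by (rule Lim_null_comparison[OF _ L])
         (use s(2) in \<open>auto intro!: always_eventually less_imp_le simp del: of_nat_Suc\<close>)
    then show ?thesis by (simp add: LIM_zero_iff)
  qed
  have psi_lim: "((\<lambda>n. psi n r) \<longlonglongrightarrow> r)" if "r \<in> Q.span B" for r
  proof -
    have "((\<lambda>n. psi n r) \<longlonglongrightarrow> (\<Sum>b\<in>B. of_rat (R r b) * b))"
      unfolding psi_def by (intro tendsto_intros s_lim)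
    moreover have "(\<Sum>b\<in>B. of_rat (R r b) * b) = r"
      using Q.sum_representation_eq[OF B(3) that finB order_refl] by (simp add: R_def qscale_def)
    ultimately show ?thesis by simp
  qed
  have psi_rat: "psi n r \<in> \<rat>" for n r
    unfolding psi_def by (intro Rats_sum Rats_mult s(1)) auto
  have psi_one: "psi n 1 = 1" for n
  proof -
    have eq: "(\<lambda>b. of_rat (R 1 b) * s n b) = (\<lambda>b. if b = 1 then s n b else 0)"
      using Q.representation_basis[OF B(3) 1] by (auto simp: R_def)
    have "psi n 1 = (\<Sum>b\<in>B. if b = 1 then s n b else 0)" unfolding psi_def eq ..
    then show ?thesis using s(3)[of 1] finB 1 by simp
  qed
  have psi_lin: "psi n (\<Sum>i\<in>I. qscale (q i) (r i)) = (\<Sum>i\<in>I. of_rat (q i) * psi n (r i))"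
    if "\<And>i. r i \<in> Q.span B" for n and I :: "'n set" and q r
  proof -
    have "R (\<Sum>i\<in>I. qscale (q i) (r i)) = (\<lambda>b. \<Sum>i\<in>I. R (qscale (q i) (r i)) b)"
      unfolding R_def by (rule Q.representation_sum[OF B(3)]) (intro Q.span_scale that)
    also have "\<dots> = (\<lambda>b. \<Sum>i\<in>I. q i * R (r i) b)"
      unfolding R_def by (subst Q.representation_scale[OF B(3) that]) simp
    finally have "psi n (\<Sum>i\<in>I. qscale (q i) (r i)) = (\<Sum>b\<in>B. (\<Sum>i\<in>I. of_rat (q i) * of_rat (R (r i) b)) * s n b)"
      by (simp add: psi_def of_rat_sum of_rat_mult)
    also have "\<dots> = (\<Sum>i\<in>I. of_rat (q i) * psi n (r i))"
      by (simp add: psi_def sum_distrib_left sum_distrib_right mult.assoc sum.swap[of _ B])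
    finally show ?thesis .
  qed
  have psi_ratconst: "psi n c = c" if cQ: "c \<in> \<rat>" for n c
  proof -
    obtain q where q: "c = of_rat q" by (rule Rats_cases[OF cQ])
    have "psi n (\<Sum>i\<in>{undefined::'n}. qscale q 1) = (\<Sum>i\<in>{undefined::'n}. of_rat q * psi n 1)"
      by (rule psi_lin) (simp add: 1 Q.span_base)
    then show ?thesis by (simp add: q qscale_def psi_one)
  qed
  define y' where "y' n = (\<chi> i. psi n (y $ i))" for n
  have y'_rat: "rational_vec (y' n)" for n by (simp add: rational_vec_def y'_def psi_rat)
  have y'_lim: "y' \<longlonglongrightarrow> y"
    unfolding y'_def by (rule vec_tendstoI) (simp add: psi_lim yi)
  have dot: "a \<bullet> y' n = psi n (a \<bullet> y)" if ra: "rational_vec a" for a n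
  proof -
    obtain qa where qa: "\<And>i. a $ i = of_rat (qa i)"
    proof -
      have "\<forall>i. \<exists>q. a $ i = of_rat q" using ra Rats_cases unfolding rational_vec_def by blast
      then show ?thesis using that by metis
    qed
    have "a \<bullet> y = (\<Sum>i\<in>UNIV. qscale (qa i) (y $ i))"
      by (simp add: inner_vec_def qscale_def qa)
    then have "psi n (a \<bullet> y) = (\<Sum>i\<in>UNIV. of_rat (qa i) * psi n (y $ i))"
      using psi_lin[OF yi] by simp
    then show ?thesis by (simp add: inner_vec_def y'_def qa)
  qed
  have ev: "eventually (\<lambda>n. a \<bullet> y' n \<le> b) sequentially" if ab: "(a,b) \<in> C" for a b
  proof (cases "a \<bullet> y = b")
    case True
    then show ?thesis using rat ab by (auto simp: dot psi_ratconst)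
  next
    case False
    with yin ab have lt: "a \<bullet> y < b" by fastforce
    have "((\<lambda>n. a \<bullet> y' n) \<longlonglongrightarrow> a \<bullet> y)" by (intro tendsto_intros y'_lim)
    from order_tendstoD(2)[OF this lt] show ?thesis by eventually_elim simp
  qed
  have "eventually (\<lambda>n. \<forall>(a,b)\<in>C. a \<bullet> y' n \<le> b) sequentially"
    unfolding case_prod_beta using ev by (intro eventually_ball_finite[OF fin]) auto
  moreover have "eventually (\<lambda>n. dist (y' n) y < \<epsilon>) sequentially"
    using tendstoD[OF y'_lim eps] .
  ultimately have "eventually (\<lambda>n. (\<forall>(a,b)\<in>C. a \<bullet> y' n \<le> b) \<and> dist (y' n) y < \<epsilon>) sequentially"
    by (rule eventually_conj)
  then obtain n where "(\<forall>(a,b)\<in>C. a \<bullet> y' n \<le> b) \<and> dist (y' n) y < \<epsilon>"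
    unfolding eventually_sequentially by blast
  then show ?thesis using y'_rat by (intro exI[of _ "y' n"]) (auto simp: dist_norm norm_minus_commute)
qed


definition is_cubic :: "(real \<Rightarrow> real) \<Rightarrow> real \<Rightarrow> bool" where
  "is_cubic g c3 \<longleftrightarrow> (\<exists>p0 p1 p2. \<forall>l. g l = p0 + p1*l + p2*l^2 + c3*l^3)"

lemma is_cubic_add: "is_cubic g c \<Longrightarrow> is_cubic h d \<Longrightarrow> is_cubic (\<lambda>l. g l + h l) (c + d)"
  unfolding is_cubic_def
proof (elim exE)
  fix p0 p1 p2 q0 q1 q2
  assume "\<forall>l. g l = p0 + p1*l + p2*l^2 + c*l^3" "\<forall>l. h l = q0 + q1*l + q2*l^2 + d*l^3"
  then show "\<exists>p0 p1 p2. \<forall>l. g l + h l = p0 + p1*l + p2*l^2 + (c+d)*l^3"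
    by (intro exI[of _ "p0+q0"] exI[of _ "p1+q1"] exI[of _ "p2+q2"]) (simp add: algebra_simps)
qed

lemma is_cubic_sum: "finite A \<Longrightarrow> (\<And>i. i \<in> A \<Longrightarrow> is_cubic (g i) (c i)) \<Longrightarrow>
    is_cubic (\<lambda>l. \<Sum>i\<in>A. g i l) (\<Sum>i\<in>A. c i)"
proof (induction A rule: finite_induct)
  case empty
  then show ?case unfolding is_cubic_def by (intro exI[of _ 0]) simp
next
  case (insert x F)
  then show ?case by (simp add: is_cubic_add)
qed

lemma is_cubic_sum0: "finite A \<Longrightarrow> (\<And>i. i \<in> A \<Longrightarrow> is_cubic (g i) 0) \<Longrightarrow>
    is_cubic (\<lambda>l. \<Sum>i\<in>A. g i l) 0"
  using is_cubic_sum[of A g "\<lambda>_. 0"] by simp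

lemma is_cubic_const: "is_cubic (\<lambda>l. (c::real)) 0"
  unfolding is_cubic_def by (intro exI[of _ c] exI[of _ 0]) simp

lemma is_cubic_1: "is_cubic (\<lambda>l. (a::real) * (x + l * v)) 0"
  unfolding is_cubic_def by (intro exI[of _ "a * x"] exI[of _ "a * v"] exI[of _ 0]) (simp add: algebra_simps)

lemma is_cubic_2: "is_cubic (\<lambda>l. (b::real) * (x + l * v) * (y + l * w)) 0"
  unfolding is_cubic_def
  by (intro exI[of _ "b*x*y"] exI[of _ "b * (x * w + v * y)"] exI[of _ "b * v * w"]) (simp add: algebra_simps power2_eq_square)

lemma is_cubic_3: "is_cubic (\<lambda>l. (d::real) * (x + l * v) * (y + l * w) * (z + l * u)) (d * v * w * u)"
  unfolding is_cubic_def
  by (intro exI[of _ "d*x*y*z"] exI[of _ "d * (v * y * z + x * w * z + x * y * u)"] exI[of _ "d * (v * w * z + v * y * u + x * w * u)"])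
     (simp add: algebra_simps power2_eq_square power3_eq_cube)

lemma cubic_ratio:
  fixes g :: "real \<Rightarrow> real"
  assumes "\<forall>l. g l = p0 + p1*l + p2*l^2 + c*l^3"
  shows "((\<lambda>l. g l / l^3) \<longlongrightarrow> c) at_top"
proof -
  have inv: "((\<lambda>l::real. inverse l) \<longlongrightarrow> 0) at_top"
    by (rule tendsto_inverse_0_at_top[OF filterlim_ident])
  have "((\<lambda>l::real. p0 * inverse l ^ 3 + p1 * inverse l ^ 2 + p2 * inverse l + c) \<longlongrightarrow> p0 * 0 ^ 3 + p1 * 0 ^ 2 + p2 * 0 + c) at_top"
    by (intro tendsto_intros inv)
  then have "((\<lambda>l::real. p0 * inverse l ^ 3 + p1 * inverse l ^ 2 + p2 * inverse l + c) \<longlongrightarrow> c) at_top"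
    by simp
  moreover have "eventually (\<lambda>l::real. p0 * inverse l ^ 3 + p1 * inverse l ^ 2 + p2 * inverse l + c = g l / l^3) at_top"
    using eventually_gt_at_top[of 0] by eventually_elim (simp add: assms field_simps power2_eq_square power3_eq_cube)
  ultimately show ?thesis by (rule Lim_transform_eventually)
qed

lemma cubic_pos:
  fixes g :: "real \<Rightarrow> real"
  assumes "is_cubic g c" "c > 0"
  shows "filterlim g at_top at_top" "g \<in> \<Theta>(\<lambda>l. l ^ 3)"
proof -
  from assms(1) obtain p0 p1 p2 where g: "\<forall>l. g l = p0 + p1*l + p2*l^2 + c*l^3"
    unfolding is_cubic_def by blast
  have lim: "((\<lambda>l. g l / l^3) \<longlongrightarrow> c) at_top" by (rule cubic_ratio[OF g])
  show "g \<in> \<Theta>(\<lambda>l. l ^ 3)" using bigthetaI_tendsto[OF _ lim] assms(2) by simp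
  have L1: "filterlim (\<lambda>l. g l / l^3 * l^3) at_top at_top"
    by (rule filterlim_tendsto_pos_mult_at_top[OF lim assms(2)]) (intro filterlim_pow_at_top filterlim_ident, simp)
  have ev: "eventually (\<lambda>l::real. g l / l^3 * l^3 = g l) at_top"
    using eventually_gt_at_top[of 0] by eventually_elim simp
  show "filterlim g at_top at_top" using filterlim_cong[OF refl refl ev] L1 by simp
qed

lemma cubic_pos_conv:
  fixes g :: "real \<Rightarrow> real"
  assumes "is_cubic g c" "filterlim g at_top at_top" "g \<in> \<Theta>(\<lambda>l. l ^ 3)"
  shows "c > 0"
proof -
  from assms(1) obtain p0 p1 p2 where g: "\<forall>l. g l = p0 + p1*l + p2*l^2 + c*l^3"
    unfolding is_cubic_def by blast
  have lim: "((\<lambda>l. g l / l^3) \<longlongrightarrow> c) at_top" by (rule cubic_ratio[OF g])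
  have "eventually (\<lambda>l. 0 \<le> g l / l^3) at_top"
    using filterlim_at_top_dense[THEN iffD1, OF assms(2), rule_format, of 0] eventually_gt_at_top[of 0]
    by eventually_elim simp
  then have "0 \<le> c" using tendsto_lowerbound[OF lim] by simp
  moreover have "c \<noteq> 0"
  proof
    assume "c = 0"
    then have "g \<in> o(\<lambda>l. l ^ 3)"
      using lim by (intro smalloI_tendsto) (auto intro: eventually_gt_at_top[of 0, THEN eventually_mono])
    moreover have "(\<lambda>l. l ^ 3) \<in> O(g)" proof -
      have "(\<lambda>l. l ^ 3) \<in> \<Theta>(g)" using assms(3) by (simp add: bigtheta_sym)
      then show ?thesis by (rule bigthetaD1)
    qed
    ultimately have "eventually (\<lambda>l::real. l ^ 3 = 0) at_top"
      using landau_o.big_small_asymmetric by blast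
    moreover have "eventually (\<lambda>l::real. l ^ 3 \<noteq> 0) at_top"
      using eventually_gt_at_top[of 0] by eventually_elim simp
    ultimately have "eventually (\<lambda>l::real. False) at_top" by eventually_elim simp
    then show False by simp
  qed
  ultimately show ?thesis by simp
qed

theorem proposition5:
  fixes P :: "(real^'n) set" and f :: "real^'n \<Rightarrow> real" and xbar vbar :: "real^'n"
  assumes "rational_polyhedron P"
    and "poly_deg_le3 f"
    and "xbar \<in> P" and "vbar \<in> rec_cone P"
    and "filterlim (\<lambda>l::real. f (xbar + l *\<^sub>R vbar)) at_top at_top"
    and "(\<lambda>l::real. f (xbar + l *\<^sub>R vbar)) \<in> \<Theta>(\<lambda>l. l ^ 3)"
    and "\<epsilon> > 0"
  shows "\<exists>xt vt. rational_vec xt \<and> rational_vec vt \<and> xt \<in> P \<and> vt \<in> rec_cone P \<and>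
           norm (xbar - xt) < \<epsilon> \<and> norm (vbar - vt) < \<epsilon> \<and>
           filterlim (\<lambda>l::real. f (xt + l *\<^sub>R vt)) at_top at_top \<and>
           (\<lambda>l::real. f (xt + l *\<^sub>R vt)) \<in> \<Theta>(\<lambda>l. l ^ 3)"
proof -
  obtain C :: "((real^'n) \<times> real) set" where C: "finite C" "\<forall>(a,b)\<in>C. rational_vec a \<and> b \<in> \<rat>"
    "P = {x. \<forall>(a,b)\<in>C. a \<bullet> x \<le> b}"
    using assms(1) unfolding rational_polyhedron_def by blast
  obtain c a Bq D where f: "\<And>x. f x = c + (\<Sum>i\<in>UNIV. a i * x $ i)
                 + (\<Sum>i\<in>UNIV. \<Sum>j\<in>UNIV. Bq i j * x $ i * x $ j)
                 + (\<Sum>i\<in>UNIV. \<Sum>j\<in>UNIV. \<Sum>k\<in>UNIV. D i j k * x $ i * x $ j * x $ k)"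
    using assms(2) unfolding poly_deg_le3_def by blast
  define p3 where "p3 v = (\<Sum>i\<in>UNIV. \<Sum>j\<in>UNIV. \<Sum>k\<in>UNIV. D i j k * v $ i * v $ j * v $ k)" for v :: "real^'n"
  have cub: "is_cubic (\<lambda>l. f (x + l *\<^sub>R v)) (p3 v)" for x v
  proof -
    have "is_cubic (\<lambda>l. c + (\<Sum>i\<in>UNIV. a i * (x $ i + l * v $ i))
                 + (\<Sum>i\<in>UNIV. \<Sum>j\<in>UNIV. Bq i j * (x $ i + l * v $ i) * (x $ j + l * v $ j))
                 + (\<Sum>i\<in>UNIV. \<Sum>j\<in>UNIV. \<Sum>k\<in>UNIV. D i j k * (x $ i + l * v $ i) * (x $ j + l * v $ j) * (x $ k + l * v $ k)))
           (0 + 0 + 0 + p3 v)"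
    proof -
      have h1: "is_cubic (\<lambda>l. \<Sum>i\<in>UNIV. a i * (x $ i + l * v $ i)) 0"
        by (rule is_cubic_sum0) (simp_all add: is_cubic_1)
      have h2: "is_cubic (\<lambda>l. \<Sum>i\<in>UNIV. \<Sum>j\<in>UNIV. Bq i j * (x $ i + l * v $ i) * (x $ j + l * v $ j)) 0"
        by (intro is_cubic_sum0) (simp_all add: is_cubic_2)
      have h3: "is_cubic (\<lambda>l. \<Sum>i\<in>UNIV. \<Sum>j\<in>UNIV. \<Sum>k\<in>UNIV. D i j k * (x $ i + l * v $ i) * (x $ j + l * v $ j) * (x $ k + l * v $ k)) (p3 v)"
        unfolding p3_def by (intro is_cubic_sum) (simp_all add: is_cubic_3)
      show ?thesis
        by (intro is_cubic_add is_cubic_const h1 h2 h3)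
    qed
    moreover have "(\<lambda>l. f (x + l *\<^sub>R v)) = (\<lambda>l. c + (\<Sum>i\<in>UNIV. a i * (x $ i + l * v $ i))
                 + (\<Sum>i\<in>UNIV. \<Sum>j\<in>UNIV. Bq i j * (x $ i + l * v $ i) * (x $ j + l * v $ j))
                 + (\<Sum>i\<in>UNIV. \<Sum>j\<in>UNIV. \<Sum>k\<in>UNIV. D i j k * (x $ i + l * v $ i) * (x $ j + l * v $ j) * (x $ k + l * v $ k)))"
      by (simp add: f)
    ultimately show ?thesis by simp
  qed
  have p3pos: "p3 vbar > 0"
    using cubic_pos_conv[OF cub assms(5,6)] .
  have "continuous (at vbar) p3" unfolding p3_def by (intro continuous_intros)
  then have "eventually (\<lambda>v. p3 v > 0) (at vbar)"
    using order_tendstoD(1)[OF _ p3pos] unfolding continuous_at by blast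
  then obtain d where d: "d > 0" "\<And>v. v \<noteq> vbar \<Longrightarrow> dist v vbar < d \<Longrightarrow> p3 v > 0"
    unfolding eventually_at by blast
  have d': "p3 v > 0" if "norm (vbar - v) < d" for v
    using d p3pos that by (cases "v = vbar") (auto simp: dist_norm norm_minus_commute)
  have xin: "\<forall>(a,b)\<in>C. a \<bullet> xbar \<le> b" using assms(3) C(3) by blast
  have vin: "\<forall>(a,b)\<in>C. a \<bullet> vbar \<le> 0"
  proof (intro ballI, clarify)
    fix a b assume ab: "(a,b) \<in> C"
    show "a \<bullet> vbar \<le> 0"
    proof (rule ccontr)
      assume "\<not> a \<bullet> vbar \<le> 0"
      then have pos: "a \<bullet> vbar > 0" by simp
      define t where "t = (b - a \<bullet> xbar) / (a \<bullet> vbar) + 1"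
      have "b - a \<bullet> xbar \<ge> 0" using xin ab by auto
      then have t0: "t \<ge> 0" using pos unfolding t_def by simp
      have "xbar + t *\<^sub>R vbar \<in> P" using assms(3,4) t0 unfolding rec_cone_def by blast
      then have "a \<bullet> (xbar + t *\<^sub>R vbar) \<le> b" using ab C(3) by blast
      moreover have "a \<bullet> (xbar + t *\<^sub>R vbar) = b + a \<bullet> vbar"
        using pos unfolding t_def by (simp add: inner_add_right field_simps)
      ultimately show False using pos by simp
    qed
  qed
  obtain xt where xt: "rational_vec xt" "\<forall>(a,b)\<in>C. a \<bullet> xt \<le> b" "norm (xbar - xt) < \<epsilon>"
    using rat_dense_polyhedron[OF C(1,2) xin assms(7)] by blast
  define C0 where "C0 = (\<lambda>(a,b). (a, 0::real)) ` C"
  have C0: "finite C0" "\<forall>(a,b)\<in>C0. rational_vec a \<and> b \<in> \<rat>" "\<forall>(a,b)\<in>C0. a \<bullet> vbar \<le> b"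
    using C(1,2) vin unfolding C0_def by auto
  obtain vt where vt: "rational_vec vt" "\<forall>(a,b)\<in>C0. a \<bullet> vt \<le> b" "norm (vbar - vt) < min \<epsilon> d"
    using rat_dense_polyhedron[OF C0 ] assms(7) d(1) by (metis min_less_iff_conj)
  have xtP: "xt \<in> P" using xt(2) C(3) by blast
  have vtC: "\<forall>(a,b)\<in>C. a \<bullet> vt \<le> 0" using vt(2) unfolding C0_def by auto
  have vtR: "vt \<in> rec_cone P"
    unfolding rec_cone_def
  proof (intro CollectI ballI allI impI)
    fix x t assume x: "x \<in> P" and t: "(0::real) \<le> t"
    show "x + t *\<^sub>R vt \<in> P"
      unfolding C(3)
    proof (intro CollectI ballI, clarify)
      fix a b assume ab: "(a,b) \<in> C"
      have "a \<bullet> x \<le> b" using x ab C(3) by blast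
      moreover have "t * (a \<bullet> vt) \<le> 0" using vtC ab t by (auto intro: mult_nonneg_nonpos)
      ultimately show "a \<bullet> (x + t *\<^sub>R vt) \<le> b" by (simp add: inner_add_right)
    qed
  qed
  have "p3 vt > 0" using d' vt(3) by simp
  then have "filterlim (\<lambda>l::real. f (xt + l *\<^sub>R vt)) at_top at_top"
      "(\<lambda>l::real. f (xt + l *\<^sub>R vt)) \<in> \<Theta>(\<lambda>l. l ^ 3)"
    using cubic_pos[OF cub] by auto
  then show ?thesis using xt vt xtP vtR by auto
qed

end
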